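(* For every $m\in\mathbb{N}_0$ and every real $t$ with $|t|<1$, \[ \frac{(\arcsin t)^{m}}{\sqrt{1-t^2}}=t^m\left[1+\sum_{k=1}^{\infty}(-1)^k\frac{Q(m+1,2k;2)}{\binom{m+2k}{m}}\frac{(2t)^{2k}}{(2k)!}\right]. \]
   Context: $s(n,k)$ ($n\ge k\ge 0$) denotes the signed Stirling numbers of the first kind, defined by $\frac{[\ln(1+x)]^k}{k!}=\sum_{n=k}^\infty s(n,k)\frac{x^n}{n!}$ for $|x|<1$; equivalently $\prod_{j=0}^{n-1}(z-j)=\sum_{k=0}^n s(n,k)z^k$. For $m\in\mathbb{N}$, $k\in\mathbb{N}_0$ and $\alpha\in\mathbb{R}$ define \[ Q(m,k;\alpha)=\sum_{\ell=0}^{k}\binom{m+\ell-1}{m-1}\, s(m+k-1,m+\ell-1)\left(\frac{m+k-\alpha}{2}\right)^{\ell}, \] with the convention $0^0=1$. *)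

theory Defs
  imports "HOL-Analysis.Analysis" "HOL-Combinatorics.Stirling"
begin

definition signed_stirling :: "nat \<Rightarrow> nat \<Rightarrow> real" where
  "signed_stirling n k = (-1) ^ (n - k) * real (stirling n k)"

text \<open>Q(m,k;alpha) for m \<ge> 1 (0^0 = 1 holds for ^ in Isabelle).\<close>
definition Q :: "nat \<Rightarrow> nat \<Rightarrow> real \<Rightarrow> real" where
  "Q m k \<alpha> = (\<Sum>l = 0..k. real ((m + l - 1) choose (m - 1))
       * signed_stirling (m + k - 1) (m + l - 1)
       * ((real (m + k) - \<alpha>) / 2) ^ l)"

end

theory Submission
  imports Defs "HOL-Computational_Algebra.Polynomial"
begin


fun beta :: "nat \<Rightarrow> nat \<Rightarrow> real" where
  "beta m 0 = (if m = 0 then 1 else 0)"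
| "beta m (Suc 0) = (if m = 1 then 1 else 0)"
| "beta m (Suc (Suc n)) = (Suc n)^2 * beta m n + (if m \<ge> 2 then beta (m-2) n else 0)"

lemma beta_less: "n < m \<Longrightarrow> beta m n = 0"
  by (induction m n rule: beta.induct) auto

lemma beta_same: "beta n n = 1"
proof (induction n rule: nat_less_induct)
  case (1 n)
  consider "n = 0" | "n = 1" | k where "n = Suc (Suc k)"
    by (metis One_nat_def not0_implies_Suc)
  then show ?case
    by cases (use 1 in \<open>auto simp: beta_less\<close>)
qed

lemma beta_odd: "odd (n - m) \<Longrightarrow> beta m n = 0"
proof (induction m n rule: beta.induct)
  case (3 m n)
  show ?case
  proof (cases "m \<le> n")
    case True
    then have "odd (n - m)" using 3(3) by auto
    moreover have "m \<ge> 2 \<Longrightarrow> odd (n - (m-2))" using 3(3) True by auto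
    ultimately show ?thesis using 3 by auto
  next
    case False
    show ?thesis
    proof (cases "m = Suc n")
      case True
      then have "n \<ge> 1 \<Longrightarrow> odd (n - (m-2))" by auto
      then show ?thesis using 3 True by (auto simp: beta_less)
    next
      case F2: False
      then have "m > Suc (Suc n)" using False 3(3) by (cases "m = Suc (Suc n)") auto
      then show ?thesis by (simp add: beta_less)
    qed
  qed
qed (auto)

lemma beta_nonneg: "beta m n \<ge> 0"
  by (induction m n rule: beta.induct) auto

lemma beta_le: "beta m n \<le> fact n"
proof (induction m n rule: beta.induct)
  case (3 m n)
  have a: "beta m n \<le> fact n" using 3 by simp
  have b: "(if m \<ge> 2 then beta (m-2) n else 0) \<le> fact n" using 3 by auto
  have "beta m (Suc (Suc n)) \<le> (real (Suc n))^2 * fact n + fact n"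
    using a b by (simp add: mult_left_mono add_mono)
  also have "\<dots> \<le> fact (Suc (Suc n))"
    by (simp add: power2_eq_square algebra_simps)
  finally show ?case .
qed auto




lemma coeff_lin_pow: "coeff ([:a,1:]^j) m = (if m \<le> j then real (j choose m) * a^(j-m) else 0)"
proof (induction j arbitrary: m)
  case 0
  then show ?case by (cases m) auto
next
  case (Suc j)
  have e: "[:a,1:]^(Suc j) = smult a ([:a,1:]^j) + pCons 0 ([:a,1:]^j)"
    by (simp add: mult_pCons_left)
  show ?case
  proof (cases m)
    case 0
    then show ?thesis using Suc by (simp add: e)
  next
    case (Suc k)
    have c: "coeff ([:a,1:]^(Suc j)) m = a * coeff ([:a,1:]^j) m + coeff ([:a,1:]^j) k"
      by (simp add: e Suc)
    consider "m \<le> j" | "m = Suc j" | "m > Suc j" by linarith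
    then show ?thesis
    proof cases
      case 1
      have "j - k = Suc (j - m)" using 1 Suc by simp
      then show ?thesis using 1 Suc by (simp add: c Suc.IH algebra_simps)
    next
      case 2
      then show ?thesis using Suc by (simp add: c Suc.IH)
    next
      case 3
      then show ?thesis using Suc by (simp add: c Suc.IH)
    qed
  qed
qed

definition V :: "nat \<Rightarrow> real poly" where
  "V n = (\<Prod>i<n. [:(real n - 1)/2 - real i, 1:])"

lemma V_rec: "V (Suc (Suc n)) = [: - (((real n + 1)/2)^2), 0, 1:] * V n"
proof -
  let ?f = "\<lambda>i. [:(real (Suc (Suc n)) - 1)/2 - real i, 1:]"
  have "V (Suc (Suc n)) = (\<Prod>i<Suc (Suc n). ?f i)" by (simp add: V_def)
  also have "\<dots> = ?f 0 * (\<Prod>i<Suc n. ?f (Suc i))"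
    by (subst prod.lessThan_Suc_shift) simp
  also have "\<dots> = ?f 0 * ((\<Prod>i<n. ?f (Suc i)) * ?f (Suc n))" by simp
  also have "(\<Prod>i<n. ?f (Suc i)) = V n"
    unfolding V_def by (intro prod.cong) (auto simp: algebra_simps)
  also have "?f 0 * (V n * ?f (Suc n)) = (?f 0 * ?f (Suc n)) * V n" by (simp only: ac_simps)
  also have "?f 0 * ?f (Suc n) = [: - (((real n + 1)/2)^2), 0, 1:]"
  proof -
    define c where "c = (real n + 1)/2"
    have "?f 0 = [:c,1:]" "?f (Suc n) = [:-c,1:]" by (auto simp: c_def field_simps)
    moreover have "[:c,1:] * [:-c,1:] = [: - (c^2), 0, 1:]"
      by (simp add: mult_pCons_left power2_eq_square)
    ultimately show ?thesis by (metis c_def)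
  qed
  finally show ?thesis .
qed

lemma coeff_V_rec: "coeff (V (Suc (Suc n))) m =
   (if m \<ge> 2 then coeff (V n) (m-2) else 0) - ((real n + 1)/2)^2 * coeff (V n) m"
  by (cases m rule: nat.exhaust[case_product nat.exhaust]; cases m)
     (auto simp: V_rec mult_pCons_left coeff_pCons split: nat.splits)

lemma falling_stirling: "(\<Prod>i<n. y - real i) = (\<Sum>j\<le>n. signed_stirling n j * y^j)"
proof -
  have "(\<Sum>j\<le>n. real (stirling n j) * (-y)^j) = pochhammer (-y) n"
    by (rule stirling_pochhammer)
  also have "\<dots> = (\<Prod>i<n. -y + real i)" by (simp add: pochhammer_prod atLeast0LessThan)
  also have "\<dots> = (\<Prod>i<n. (-1) * (y - real i))" by (intro prod.cong) auto
  also have "\<dots> = (-1)^n * (\<Prod>i<n. y - real i)" by (subst prod.distrib) simp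
  finally have *: "(\<Prod>i<n. y - real i) = (-1)^n * (\<Sum>j\<le>n. real (stirling n j) * (-y)^j)"
    by (simp add: algebra_simps)
  also have "\<dots> = (\<Sum>j\<le>n. signed_stirling n j * y^j)"
    unfolding sum_distrib_left signed_stirling_def
  proof (intro sum.cong refl)
    fix j assume "j \<in> {..n}"
    then have "(-1::real)^n = (-1)^(n-j) * (-1)^j"
      by (simp add: power_add[symmetric])
    then show "(-1)^n * (real (stirling n j) * (-y)^j) = (-1)^(n-j) * real (stirling n j) * y^j"
      by (simp add: power_minus' algebra_simps)
  qed
  finally show ?thesis .
qed




lemma V_eq: "V n = (\<Sum>j\<le>n. smult (signed_stirling n j) ([:(real n - 1)/2, 1:]^j))"
proof -
  have "poly (V n) z = poly (\<Sum>j\<le>n. smult (signed_stirling n j) ([:(real n - 1)/2, 1:]^j)) z" for z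
  proof -
    have "poly (V n) z = (\<Prod>i<n. ((real n - 1)/2 + z) - real i)"
      by (simp add: V_def poly_prod algebra_simps)
    also have "\<dots> = (\<Sum>j\<le>n. signed_stirling n j * ((real n - 1)/2 + z)^j)"
      by (rule falling_stirling)
    finally show ?thesis by (simp add: poly_sum algebra_simps)
  qed
  then show ?thesis using poly_eq_poly_eq_iff by blast
qed

lemma coeff_V: "coeff (V n) m = (\<Sum>j\<le>n. signed_stirling n j *
    (if m \<le> j then real (j choose m) * ((real n - 1)/2)^(j-m) else 0))"
  by (simp add: V_eq coeff_sum coeff_lin_pow)

lemma Q_V: "Q (m+1) (2*k) 2 = coeff (V (m+2*k)) m"
proof -
  define n where "n = m + 2*k"
  define g where "g j = signed_stirling n j *
    (if m \<le> j then real (j choose m) * ((real n - 1)/2)^(j-m) else 0)" for j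
  have "coeff (V n) m = (\<Sum>j\<le>n. g j)" by (simp add: coeff_V g_def)
  also have "\<dots> = (\<Sum>j\<in>{m..n}. g j)"
    by (rule sum.mono_neutral_right) (auto simp: g_def)
  also have "\<dots> = (\<Sum>l\<in>{0..2*k}. g (l + m))"
    using sum.shift_bounds_cl_nat_ivl[of g 0 m "2*k"] by (simp add: n_def add.commute)
  also have "\<dots> = Q (m+1) (2*k) 2"
    unfolding Q_def g_def n_def
    by (intro sum.cong refl) (simp add: algebra_simps)
  finally show ?thesis by (simp add: n_def)
qed

lemma idt: "(real (Suc k))^2 * (w * a) + (-4) * w * b = (-4) * w * (b - ((real k + 1)/2)^2 * a)"
  by (simp add: power2_eq_square field_simps)

lemma idt2: "(real (Suc k))^2 * (w * a) = (-4) * w * (- (((real k + 1)/2)^2 * a))"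
  by (simp add: power2_eq_square field_simps)

lemma beta_V: "even (n - m) \<Longrightarrow> beta m n = (-4)^((n-m) div 2) * coeff (V n) m"
proof (induction m n rule: beta.induct)
  case (1 m)
  then show ?case by (simp add: V_def)
next
  case (2 m)
  have V1: "V (Suc 0) = [:0,1:]" by (simp add: V_def)
  consider "m = 0" | "m = 1" | k where "m = Suc (Suc k)"
    by (metis One_nat_def not0_implies_Suc)
  then show ?case using 2 by cases (auto simp: V1)
next
  case (3 m n)
  show ?case
  proof (cases "m \<le> n")
    case True
    have sd: "Suc (Suc n) - m = (n - m) + 2" using True by arith
    have ev: "even (n - m)" using 3(3) unfolding sd by simp
    then obtain q where q: "n - m = 2 * q" by (rule evenE)
    have e1: "(Suc (Suc n) - m) div 2 = Suc ((n - m) div 2)" unfolding sd q by simp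
    have IH1: "beta m n = (-4)^((n-m) div 2) * coeff (V n) m" using 3(1)[OF ev] .
    show ?thesis
    proof (cases "m \<ge> 2")
      case True
      have "n - (m-2) = (n - m) + 2" using True \<open>m \<le> n\<close> by arith
      then have e2: "(n - (m-2)) div 2 = Suc ((n - m) div 2)" unfolding q by simp
      have IH2: "beta (m-2) n = (-4)^Suc ((n-m) div 2) * coeff (V n) (m-2)"
      proof -
        have "n - (m-2) = (n - m) + 2" using True \<open>m \<le> n\<close> by arith
        then have ev2: "even (n - (m-2))" using ev by simp
        have "beta (m-2) n = (-4)^((n - (m-2)) div 2) * coeff (V n) (m-2)"
          using 3(2)[OF True ev2] .
        then show ?thesis unfolding e2 .
      qed
      have cr: "coeff (V (Suc (Suc n))) m = coeff (V n) (m-2) - ((real n + 1)/2)^2 * coeff (V n) m"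
        using True by (simp add: coeff_V_rec)
      define w where "w = ((-4::real)^((n-m) div 2))"
      have IH1': "beta m n = w * coeff (V n) m" using IH1 by (simp add: w_def)
      have IH2': "beta (m-2) n = (-4) * w * coeff (V n) (m-2)" using IH2 by (simp add: w_def)
      have "beta m (Suc (Suc n)) = (real (Suc n))^2 * beta m n + beta (m-2) n"
        by (simp only: beta.simps(3) if_P[OF True] of_nat_power)
      also have "\<dots> = (-4) * w * coeff (V (Suc (Suc n))) m"
        unfolding IH1' IH2' cr by (rule idt)
      also have "\<dots> = (-4)^((Suc (Suc n) - m) div 2) * coeff (V (Suc (Suc n))) m"
        unfolding e1 w_def power_Suc by (simp only: mult.assoc)
      finally show ?thesis .
    next
      case False
      have cr: "coeff (V (Suc (Suc n))) m = - (((real n + 1)/2)^2 * coeff (V n) m)"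
        using False by (simp add: coeff_V_rec)
      define w where "w = ((-4::real)^((n-m) div 2))"
      have IH1': "beta m n = w * coeff (V n) m" using IH1 by (simp add: w_def)
      have "beta m (Suc (Suc n)) = (real (Suc n))^2 * beta m n"
        using False by (simp only: beta.simps(3) if_not_P[OF False] if_False add_0_right of_nat_power)
      also have "\<dots> = (-4) * w * coeff (V (Suc (Suc n))) m"
        unfolding IH1' cr by (rule idt2)
      also have "\<dots> = (-4)^((Suc (Suc n) - m) div 2) * coeff (V (Suc (Suc n))) m"
        unfolding e1 w_def power_Suc by (simp only: mult.assoc)
      finally show ?thesis .
    qed
  next
    case False
    have "m \<noteq> Suc n"
    proof
      assume "m = Suc n"
      then have "Suc (Suc n) - m = 1" by simp
      then show False using 3(3) by simp
    qed
    then have "m = Suc (Suc n) \<or> m > Suc (Suc n)" using False by arith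
    then show ?thesis
    proof
      assume m: "m = Suc (Suc n)"
      have h2: "beta (m-2) n = (-4)^((n - (m-2)) div 2) * coeff (V n) (m-2)"
        by (rule 3(2)) (use m in auto)
      have h1: "beta m n = (-4)^((n - m) div 2) * coeff (V n) m"
        by (rule 3(1)) (use m in auto)
      have a: "coeff (V n) n = 1" using h2 beta_same[of n] m by simp
      have b: "coeff (V n) (Suc (Suc n)) = 0" using h1 beta_less[of n m] m by simp
      have "beta m (Suc (Suc n)) = 1"
        using m beta_same[of n] beta_less[of n m] by simp
      moreover have "coeff (V (Suc (Suc n))) m = 1"
        using m a b by (simp add: coeff_V_rec)
      ultimately show ?thesis using m by simp
    next
      assume m: "m > Suc (Suc n)"
      have h2: "beta (m-2) n = (-4)^((n - (m-2)) div 2) * coeff (V n) (m-2)"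
        by (rule 3(2)) (use m in auto)
      have h1: "beta m n = (-4)^((n - m) div 2) * coeff (V n) m"
        by (rule 3(1)) (use m in auto)
      have a: "coeff (V n) (m-2) = 0" using h2 beta_less[of n "m-2"] m by simp
      have b: "coeff (V n) m = 0" using h1 beta_less[of n m] m by simp
      have "beta m (Suc (Suc n)) = 0" using beta_less[of "Suc (Suc n)" m] m by simp
      moreover have "coeff (V (Suc (Suc n))) m = 0"
        using m a b by (simp add: coeff_V_rec)
      ultimately show ?thesis by simp
    qed
  qed
qed




definition a :: "nat \<Rightarrow> nat \<Rightarrow> real" where "a m n = fact m / fact n * beta m n"

lemma a_bound: "\<bar>a m n\<bar> \<le> fact m"
proof -
  have "\<bar>a m n\<bar> = fact m * (beta m n / fact n)"
    using beta_nonneg[of m n] by (simp add: a_def)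
  also have "\<dots> \<le> fact m * 1"
    using beta_le[of m n] by (intro mult_left_mono) auto
  finally show ?thesis by simp
qed

lemma summ0: "norm (x::real) < 1 \<Longrightarrow> summable (\<lambda>n. a m n * x^n)"
proof (rule summable_comparison_test')
  assume x: "norm x < 1"
  show "summable (\<lambda>n. fact m * \<bar>x\<bar>^n :: real)"
    using x by (intro summable_mult summable_geometric) auto
  show "norm (a m n * x^n) \<le> fact m * \<bar>x\<bar>^n" for n
    using a_bound[of m n] by (simp add: abs_mult power_abs mult_right_mono)
qed

lemma summ1: "norm (x::real) < 1 \<Longrightarrow> summable (\<lambda>n. diffs (a m) n * x^n)"
  by (rule termdiff_converges[of x 1]) (auto intro: summ0)

lemma summ2: "norm (x::real) < 1 \<Longrightarrow> summable (\<lambda>n. diffs (diffs (a m)) n * x^n)"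
  by (rule termdiff_converges[of x 1]) (auto intro: summ1)

definition P where "P m x = (\<Sum>n. a m n * x^n)"
definition P1 where "P1 m x = (\<Sum>n. diffs (a m) n * x^n)"
definition P2 where "P2 m x = (\<Sum>n. diffs (diffs (a m)) n * x^n)"

lemma DP: "norm (x::real) < 1 \<Longrightarrow> (P m has_field_derivative P1 m x) (at x)"
  unfolding P_def P1_def by (rule termdiffs_strong'[of 1]) (auto intro: summ0)

lemma DP1: "norm (x::real) < 1 \<Longrightarrow> (P1 m has_field_derivative P2 m x) (at x)"
  unfolding P2_def P1_def by (rule termdiffs_strong'[of 1]) (auto intro: summ1)

lemma a_rec: "real (n+1) * real (n+2) * a m (n+2) = real (n+1)^2 * a m n + real m * (real m - 1) * a (m-2) n"
proof -
  have f: "fact (Suc (Suc n)) = real (n+1) * real (n+2) * (fact n :: real)" by (simp add: algebra_simps)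
  have h: "real (n+1) * real (n+2) * (fact m / fact (Suc (Suc n)) * X) = fact m / fact n * X" for X
  proof -
    have c: "real (n+1) * real (n+2) \<noteq> 0" by simp
    have "fact m / fact (Suc (Suc n)) = fact m / fact n / (real (n+1) * real (n+2))"
      unfolding f by (simp add: divide_divide_eq_left ac_simps)
    then show ?thesis using c by simp
  qed
  have L: "real (n+1) * real (n+2) * a m (n+2) = fact m / fact n * beta m (Suc (Suc n))"
    unfolding a_def using h[of "beta m (Suc (Suc n))"] by (simp only: numeral_2_eq_2 add_Suc_right add_0_right)
  show ?thesis
  proof (cases "m \<ge> 2")
    case True
    then obtain k where k: "m = Suc (Suc k)" by (metis add_2_eq_Suc le_Suc_ex)
    have g: "fact (Suc (Suc k)) = real (Suc (Suc k)) * real (Suc k) * (fact k :: real)" by (simp add: algebra_simps)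
    have b: "beta (Suc (Suc k)) (Suc (Suc n)) = real (Suc n)^2 * beta (Suc (Suc k)) n + beta k n" by simp
    have "real (n+1) * real (n+2) * a m (n+2) = real (n+1)^2 * a m n + fact m / fact n * beta k n"
      unfolding L unfolding a_def k b by (simp add: field_simps)
    also have "fact m / fact n * beta k n = real m * (real m - 1) * a (m-2) n"
      unfolding a_def k g by (simp add: field_simps)
    finally show ?thesis .
  next
    case False
    then have z: "real m * (real m - 1) = 0" by (cases m) auto
    have b: "beta m (Suc (Suc n)) = real (Suc n)^2 * beta m n" using False by simp
    show ?thesis unfolding L b z unfolding a_def by simp
  qed
qed

definition sh :: "(nat \<Rightarrow> real) \<Rightarrow> nat \<Rightarrow> real" where
  "sh f n = (if n = 0 then 0 else f (n - 1))"

lemma sums_sh: "(\<lambda>n. f n * x^n) sums s \<Longrightarrow> (\<lambda>n. sh f n * x^n) sums (x * s)"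
proof -
  assume "(\<lambda>n. f n * x^n) sums s"
  then have "(\<lambda>n. x * (f n * x^n)) sums (x * s)" by (rule sums_mult)
  then have "(\<lambda>n. sh f (Suc n) * x^(Suc n)) sums (x * s)" by (simp add: sh_def algebra_simps)
  then show ?thesis by (subst (asm) sums_Suc_iff) (simp add: sh_def)
qed

lemma ode: "norm (x::real) < 1 \<Longrightarrow>
   (1 - x^2) * P2 m x - 3 * x * P1 m x - P m x = real m * (real m - 1) * P (m-2) x"
proof -
  assume x: "norm x < 1"
  let ?c0 = "a m" and ?c1 = "diffs (a m)" and ?c2 = "diffs (diffs (a m))"
  have s0: "(\<lambda>n. ?c0 n * x^n) sums P m x" using summ0[OF x] by (simp add: P_def summable_sums)
  have s1: "(\<lambda>n. ?c1 n * x^n) sums P1 m x" using summ1[OF x] by (simp add: P1_def summable_sums)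
  have s2: "(\<lambda>n. ?c2 n * x^n) sums P2 m x" using summ2[OF x] by (simp add: P2_def summable_sums)
  have s3: "(\<lambda>n. a (m-2) n * x^n) sums P (m-2) x" using summ0[OF x] by (simp add: P_def summable_sums)
  have "(\<lambda>n. (?c2 n - sh (sh ?c2) n - 3 * sh ?c1 n - ?c0 n) * x^n) sums
        (P2 m x - x * (x * P2 m x) - 3 * (x * P1 m x) - P m x)"
    using sums_diff[OF sums_diff[OF sums_diff[OF s2 sums_sh[OF sums_sh[OF s2]]]
          sums_mult[OF sums_sh[OF s1], of 3]] s0]
    by (simp add: algebra_simps)
  moreover have "?c2 n - sh (sh ?c2) n - 3 * sh ?c1 n - ?c0 n = real m * (real m - 1) * a (m-2) n" for n
  proof -
    have "?c2 n - sh (sh ?c2) n - 3 * sh ?c1 n - ?c0 n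
        = real (n+1) * real (n+2) * a m (n+2) - real (n+1)^2 * a m n"
    proof (cases n)
      case 0 then show ?thesis by (simp add: diffs_def sh_def)
    next
      case (Suc k)
      then show ?thesis
        by (cases k) (simp_all add: diffs_def sh_def power2_eq_square algebra_simps)
    qed
    then show ?thesis using a_rec[of n m] by simp
  qed
  ultimately have "(\<lambda>n. real m * (real m - 1) * a (m-2) n * x^n) sums
        (P2 m x - x * (x * P2 m x) - 3 * (x * P1 m x) - P m x)" by simp
  moreover have "(\<lambda>n. real m * (real m - 1) * a (m-2) n * x^n) sums (real m * (real m - 1) * P (m-2) x)"
    using sums_mult[OF s3, of "real m * (real m - 1)"] by (simp add: algebra_simps)
  ultimately show ?thesis using sums_unique2 by (fastforce simp: power2_eq_square algebra_simps)
qed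




lemma dsqrt: "\<bar>x\<bar> < 1 \<Longrightarrow> ((\<lambda>x. sqrt (1 - x^2)) has_real_derivative (- x / sqrt (1 - x^2))) (at x)"
proof -
  assume x: "\<bar>x\<bar> < 1"
  then have p: "0 < 1 - x^2" by (simp add: abs_square_less_1)
  have d1: "((\<lambda>x. 1 - x^2) has_real_derivative (- (2*x))) (at x)"
    by (rule DERIV_cong[OF DERIV_diff[OF DERIV_const DERIV_pow]]) simp
  have d2: "(sqrt has_real_derivative (inverse (sqrt (1 - x^2)) / 2)) (at (1 - x^2))"
    by (rule DERIV_real_sqrt[OF p])
  have "((\<lambda>x. sqrt (1 - x^2)) has_real_derivative (inverse (sqrt (1 - x^2)) / 2 * (- (2*x)))) (at x)"
    by (rule DERIV_chain2[OF d2 d1])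
  then show ?thesis by (rule DERIV_cong) (simp add: field_simps)
qed

lemma darcsin_pow: "\<bar>x\<bar> < 1 \<Longrightarrow>
  ((\<lambda>x. arcsin x ^ n) has_real_derivative (real n * arcsin x ^ (n - 1) * inverse (sqrt (1 - x^2)))) (at x)"
proof -
  assume x: "\<bar>x\<bar> < 1"
  have "(arcsin has_real_derivative inverse (sqrt (1 - x^2))) (at x)"
    using x by (intro DERIV_arcsin) auto
  from DERIV_power[OF this, of n] show ?thesis by (simp add: algebra_simps)
qed

lemma P_zero: "P m 0 = (if m = 0 then 1 else 0)"
  unfolding P_def by (subst powser_zero) (simp add: a_def)

lemma P1_zero: "P1 m 0 = (if m = 1 then 1 else 0)"
  unfolding P1_def by (subst powser_zero) (simp add: a_def diffs_def)

lemma const_on: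
  assumes "\<And>x. \<bar>x\<bar> < 1 \<Longrightarrow> (f has_real_derivative 0) (at x)" "\<bar>x\<bar> < (1::real)"
  shows "f x = f 0"
proof -
  have "\<exists>c. \<forall>x\<in>{-1<..<1}. f x = c"
  proof (rule has_field_derivative_zero_constant)
    show "convex {-1<..<(1::real)}" by (simp add: convex_real_interval)
    fix y :: real assume "y \<in> {-1<..<1}"
    then have "\<bar>y\<bar> < 1" by (simp add: abs_less_iff)
    then show "(f has_field_derivative 0) (at y within {-1<..<1})"
      by (rule has_field_derivative_at_within[OF assms(1)])
  qed
  then obtain c where "\<forall>x\<in>{-1<..<1}. f x = c" by blast
  then show ?thesis using assms(2) by (auto simp: abs_less_iff)
qed

lemma E_from_D:
  assumes D: "\<And>x. \<bar>x\<bar> < 1 \<Longrightarrow> (1 - x^2) * P1 m x - x * P m x = real m * arcsin x ^ (m-1)"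
    and x: "\<bar>x\<bar> < 1"
  shows "arcsin x ^ m = sqrt (1 - x^2) * P m x"
proof -
  define G where "G x = sqrt (1 - x^2) * P m x - arcsin x ^ m" for x
  have "(G has_real_derivative 0) (at y)" if y: "\<bar>y\<bar> < 1" for y
  proof -
    have p: "0 < 1 - y^2" using y by (simp add: abs_square_less_1)
    have s: "sqrt (1 - y^2) * sqrt (1 - y^2) = 1 - y^2" using p by simp
    have sp: "sqrt (1 - y^2) > 0" using p by simp
    have "(G has_real_derivative (- y / sqrt (1 - y^2) * P m y + sqrt (1 - y^2) * P1 m y
           - real m * arcsin y ^ (m - 1) * inverse (sqrt (1 - y^2)))) (at y)"
      unfolding G_def
      by (rule DERIV_cong[OF DERIV_diff[OF DERIV_mult[OF dsqrt[OF y] DP] darcsin_pow[OF y]]])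
         (use y in \<open>auto simp: algebra_simps\<close>)
    moreover have "- y / sqrt (1 - y^2) * P m y + sqrt (1 - y^2) * P1 m y
           - real m * arcsin y ^ (m - 1) * inverse (sqrt (1 - y^2))
         = ((1 - y^2) * P1 m y - y * P m y - real m * arcsin y ^ (m-1)) / sqrt (1 - y^2)"
      using sp s by (simp add: field_simps)
    ultimately show ?thesis using D[OF y] by simp
  qed
  then have "G x = G 0" using x by (rule const_on)
  then show ?thesis by (cases m) (simp_all add: G_def P_zero)
qed

lemma D_from_E:
  assumes E: "\<And>x. m \<ge> 2 \<Longrightarrow> \<bar>x\<bar> < 1 \<Longrightarrow> arcsin x ^ (m-2) = sqrt (1 - x^2) * P (m-2) x"
    and x: "\<bar>x\<bar> < 1"
  shows "(1 - x^2) * P1 m x - x * P m x = real m * arcsin x ^ (m-1)"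
proof -
  define F where "F x = (1 - x^2) * P1 m x - x * P m x - real m * arcsin x ^ (m-1)" for x
  have "(F has_real_derivative 0) (at y)" if y: "\<bar>y\<bar> < 1" for y
  proof -
    have p: "0 < 1 - y^2" using y by (simp add: abs_square_less_1)
    have sp: "sqrt (1 - y^2) > 0" using p by simp
    have "(F has_real_derivative ((- (2 * y)) * P1 m y + (1 - y^2) * P2 m y - (P m y + y * P1 m y)
           - real m * (real (m - 1) * arcsin y ^ (m - 1 - 1) * inverse (sqrt (1 - y^2))))) (at y)"
    proof -
      have d1: "((\<lambda>x. 1 - x^2) has_real_derivative (- (2*y))) (at y)"
        by (rule DERIV_cong[OF DERIV_diff[OF DERIV_const DERIV_pow]]) simp
      have yy: "norm y < 1" using y by simp
      show ?thesis unfolding F_def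
        by (rule DERIV_cong[OF DERIV_diff[OF DERIV_diff[OF DERIV_mult[OF d1 DP1[OF yy]]
              DERIV_mult[OF DERIV_ident DP[OF yy]]] DERIV_cmult[OF darcsin_pow[OF y]]]])
           (simp add: algebra_simps)
    qed
    moreover have "(- (2 * y)) * P1 m y + (1 - y^2) * P2 m y - (P m y + y * P1 m y)
           - real m * (real (m - 1) * arcsin y ^ (m - 1 - 1) * inverse (sqrt (1 - y^2))) = 0"
    proof -
      have o: "(1 - y^2) * P2 m y - 3 * y * P1 m y - P m y = real m * (real m - 1) * P (m-2) y"
        using ode[of y m] y by simp
      show ?thesis
      proof (cases "m \<ge> 2")
        case True
        have r: "real (m - 1) = real m - 1" using True by simp
        have "arcsin y ^ (m - 1 - 1) = sqrt (1 - y^2) * P (m-2) y"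
          using E[OF True y] by (simp add: numeral_2_eq_2)
        then have A: "arcsin y ^ (m - 1 - 1) * inverse (sqrt (1 - y^2)) = P (m-2) y"
          using sp by simp
        have "(- (2 * y)) * P1 m y + (1 - y^2) * P2 m y - (P m y + y * P1 m y)
           - real m * (real (m - 1) * arcsin y ^ (m - 1 - 1) * inverse (sqrt (1 - y^2)))
           = ((1 - y^2) * P2 m y - 3 * y * P1 m y - P m y) - real m * (real m - 1) * 
              (arcsin y ^ (m - 1 - 1) * inverse (sqrt (1 - y^2)))"
          unfolding r by (simp add: algebra_simps)
        then show ?thesis unfolding A o by simp
      next
        case False
        then consider "m = 0" | "m = 1" by linarith
        then show ?thesis using o by cases (simp_all add: algebra_simps)
      qed
    qed
    ultimately show ?thesis by simp
  qed
  then have "F x = F 0" using x by (rule const_on)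
  moreover have "F 0 = 0" by (cases m) (auto simp: F_def P1_zero)
  ultimately show ?thesis by (simp add: F_def)
qed

lemma main_E: "\<bar>x\<bar> < 1 \<Longrightarrow> arcsin x ^ m = sqrt (1 - x^2) * P m x"
proof (induction m arbitrary: x rule: less_induct)
  case (less m)
  show ?case
  proof (rule E_from_D[OF _ less.prems])
    fix y :: real assume y: "\<bar>y\<bar> < 1"
    show "(1 - y^2) * P1 m y - y * P m y = real m * arcsin y ^ (m-1)"
      by (rule D_from_E[OF _ y]) (rule less.IH, auto)
  qed
qed




lemma term_eq: "a m (m + 2 * j) * t ^ (2 * j) =
   (-1) ^ j * Q (m + 1) (2 * j) 2 / real ((m + 2 * j) choose m) * (2 * t) ^ (2 * j) / fact (2 * j)"
proof -
  have b: "beta m (m + 2*j) = (-4)^j * Q (m+1) (2*j) 2"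
    using beta_V[of "m + 2*j" m] Q_V[of m j] by simp
  have c: "real ((m + 2 * j) choose m) = fact (m + 2*j) / (fact m * fact (2*j))"
    by (subst binomial_fact) auto
  have p: "(2 * t) ^ (2 * j) = 4^j * t^(2*j)" by (simp add: power_mult_distrib power_mult)
  have q: "(-4::real)^j = (-1)^j * 4^j" by (simp add: power_mult_distrib[symmetric])
  show ?thesis unfolding a_def b c p q by (simp add: field_simps)
qed

theorem corollary2p1:
  fixes m :: nat and t :: real
  assumes "\<bar>t\<bar> < 1"
  shows "summable (\<lambda>k. (-1) ^ (k + 1) * Q (m + 1) (2 * (k + 1)) 2
              / real ((m + 2 * (k + 1)) choose m) * (2 * t) ^ (2 * (k + 1)) / fact (2 * (k + 1)))
       \<and> arcsin t ^ m / sqrt (1 - t\<^sup>2) =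
           t ^ m * (1 + (\<Sum>k. (-1) ^ (k + 1) * Q (m + 1) (2 * (k + 1)) 2
              / real ((m + 2 * (k + 1)) choose m) * (2 * t) ^ (2 * (k + 1)) / fact (2 * (k + 1))))"
proof -
  define h where "h j = a m (m + j) * t ^ j" for j
  define f where "f k = (-1) ^ (k + 1) * Q (m + 1) (2 * (k + 1)) 2
              / real ((m + 2 * (k + 1)) choose m) * (2 * t) ^ (2 * (k + 1)) / fact (2 * (k + 1))" for k
  have p: "0 < 1 - t^2" using assms by (simp add: abs_square_less_1)
  have hs: "summable h"
  proof (rule summable_comparison_test')
    show "summable (\<lambda>n. fact m * \<bar>t\<bar>^n :: real)"
      using assms by (intro summable_mult summable_geometric) auto
    show "norm (h n) \<le> fact m * \<bar>t\<bar>^n" for n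
      using a_bound[of m "m+n"] by (simp add: h_def abs_mult power_abs mult_right_mono)
  qed
  have "(\<lambda>j. a m (j + m) * t ^ (j + m)) sums (t^m * suminf h)"
    using sums_mult[OF summable_sums[OF hs], of "t^m"] by (simp add: h_def power_add algebra_simps)
  then have "(\<lambda>n. a m n * t ^ n) sums (t^m * suminf h + (\<Sum>i<m. a m i * t^i))"
    by (rule sums_iff_shift[THEN iffD1])
  moreover have "(\<Sum>i<m. a m i * t^i) = 0" by (auto simp: a_def beta_less)
  moreover have "(\<lambda>n. a m n * t ^ n) sums P m t"
    using summ0[of t m] assms by (simp add: P_def summable_sums)
  ultimately have Pm: "P m t = t^m * suminf h" using sums_unique2 by fastforce
  have "(\<lambda>k. h (2 * k)) sums suminf h"
  proof (subst sums_mono_reindex)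
    show "strict_mono (\<lambda>k::nat. 2 * k)" by (auto simp: strict_mono_def)
    show "h n = 0" if "n \<notin> range (\<lambda>k::nat. 2 * k)" for n
    proof -
      have "odd n" using that by (metis evenE rangeI)
      then show ?thesis by (simp add: h_def a_def beta_odd)
    qed
    show "h sums suminf h" using hs by (simp add: summable_sums)
  qed
  then have "(\<lambda>k. h (2 * Suc k)) sums (suminf h - h 0)"
    using sums_Suc_iff[of "\<lambda>k. h (2*k)"] by simp
  moreover have "h (2 * Suc k) = f k" for k
    unfolding h_def f_def using term_eq[of m "Suc k" t] by simp
  moreover have "h 0 = 1" by (simp add: h_def a_def beta_same)
  ultimately have fs: "f sums (suminf h - 1)" by simp
  have "arcsin t ^ m / sqrt (1 - t^2) = P m t"
    using main_E[OF assms, of m] p by simp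
  also have "\<dots> = t ^ m * (1 + suminf f)" using Pm sums_unique[OF fs] by simp
  finally show ?thesis using fs unfolding f_def by (auto simp: sums_iff)
qed


end
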